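(* Let $a,b,d>0$, let $c_{-}$ be the unique negative zero of $Q(x)=4ax^3-b^2x^2-18abd\,x+27a^2d^2+4db^3$, let $c^{*}=-\sqrt{3bd}$, and suppose $c\in(c_{-},c^{*})$. Let $\phi(x)=\frac{ax^3+bx^2+cx+d}{x^3}$ ($x>0$) and $P(t)=t^4-at^3-bt^2-ct-d$, $t>0$. Let $c_b$ be the unique negative root of the quadratic polynomial $H(x)=108x^2+(108ab+27a^3)x-9a^2b^2-32b^3$. \begin{description} \item[(a)] If $c=c_b$ then $P'$ touches the horizontal axis (i.e. $P'(t^* )=P''(t^* )=0$) at $t^{*}=-\frac{6c_{b}+ab}{3a^2+8b}$, and $t^*>0$. \item[(b)] If $c_{b}\geq \frac{b^2-12d}{3a}$ then $\phi$ has a unique positive equilibrium for all $c\in(c_{-},c^{*})$. \item[(c)] If $c_{b}<\frac{b^2-12d}{3a}$ then, as the parameter $c$ increases from $c_b$ (with $a,b,d$ fixed), $P$ touches the horizontal axis first at a local minimum point $t_m$ of $P$ and next at a local maximum point $t_M$ of $P$, with $0<t_M<t_m$. Let $c_m$ and $c_M$ be the values of the parameter $c$ corresponding to $t_m$ and $t_M$ respectively. Then $$c_{b}<c_{m}<c_{M}<c^{*},\qquad c_{-}<c_{M}.$$ Moreover: \begin{description} \item[(c1)] If $c_{-}\leq c_{m}$: for $c\in(c_m,c_M)$, $\phi$ has three positive equilibria. For $c=c_m$, $\phi$ has two positive equilibria, one of which is $t_m$; the graph of $\phi$ is tangent to the line $y=x$ at $t_m$, and $t_m$ is greater than the other equilibrium.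 For $c=c_M$, $\phi$ has two positive equilibria, one of which is $t_M$; the graph of $\phi$ is tangent to the line $y=x$ at $t_M$, and $t_M$ is lower than the other equilibrium. For $c\in(c_{-},c_m)\cup(c_M,c^{*})$, $\phi$ has a unique positive equilibrium. \item[(c2)] If $c_m<c_{-}$: for $c\in(c_{-},c_M)$, $\phi$ has three positive equilibria. For $c=c_M$, $\phi$ has two positive equilibria, one of which is $t_M$; the graph of $\phi$ is tangent to the line $y=x$ at $t_M$, and $t_M$ is lower than the other equilibrium. For $c\in(c_M,c^{*})$, $\phi$ has a unique positive equilibrium. \end{description} \end{description}
   Context: $\phi$ is the right-hand side of the difference equation $x_{n+1}=\frac{ax_n^3+bx_n^2+cx_n+d}{x_n^3}$. An equilibrium of $\phi$ is a point $t>0$ with $\phi(t)=t$; these are exactly the positive roots of $P$. "$P$ touches the horizontal axis at $t_0$" means $t_0$ is a root of $P$ with $P'(t_0)=0$ (a double root). *)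

theory Defs
  imports "HOL-Analysis.Analysis" "HOL-Computational_Algebra.Polynomial"
begin

definition phi :: "real \<Rightarrow> real \<Rightarrow> real \<Rightarrow> real \<Rightarrow> real \<Rightarrow> real" where
  "phi a b c d x = (a*x^3 + b*x^2 + c*x + d) / x^3"

definition Pp :: "real \<Rightarrow> real \<Rightarrow> real \<Rightarrow> real \<Rightarrow> real poly" where
  "Pp a b c d = [:-d, -c, -b, -a, 1:]"

definition Qf :: "real \<Rightarrow> real \<Rightarrow> real \<Rightarrow> real \<Rightarrow> real" where
  "Qf a b d x = 4*a*x^3 - b^2*x^2 - 18*a*b*d*x + 27*a^2*d^2 + 4*d*b^3"

definition Hf :: "real \<Rightarrow> real \<Rightarrow> real \<Rightarrow> real" where
  "Hf a b x = 108*x^2 + (108*a*b + 27*a^3)*x - 9*a^2*b^2 - 32*b^3"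

definition equilibria :: "real \<Rightarrow> real \<Rightarrow> real \<Rightarrow> real \<Rightarrow> real set" where
  "equilibria a b c d = {t. 0 < t \<and> phi a b c d t = t}"

definition touches :: "real poly \<Rightarrow> real \<Rightarrow> bool" where
  "touches p t0 \<longleftrightarrow> poly p t0 = 0 \<and> poly (pderiv p) t0 = 0"

definition loc_min_pt :: "(real \<Rightarrow> real) \<Rightarrow> real \<Rightarrow> bool" where
  "loc_min_pt f x \<longleftrightarrow> (\<forall>\<^sub>F y in nhds x. f x \<le> f y)"

definition loc_max_pt :: "(real \<Rightarrow> real) \<Rightarrow> real \<Rightarrow> bool" where
  "loc_max_pt f x \<longleftrightarrow> (\<forall>\<^sub>F y in nhds x. f y \<le> f x)"

end

theory Submission
  imports Defs
begin


definition G :: "real \<Rightarrow> real \<Rightarrow> real \<Rightarrow> real \<Rightarrow> real" where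
  "G a b d t = t^3 - a*t^2 - b*t - d/t"
definition R :: "real \<Rightarrow> real \<Rightarrow> real \<Rightarrow> real \<Rightarrow> real" where
  "R a b d t = 3*t^4 - 2*a*t^3 - b*t^2 + d"

lemma poly_Pp: "poly (Pp a b c d) t = t^4 - a*t^3 - b*t^2 - c*t - d"
  by (simp add: Pp_def algebra_simps power_def)

lemma poly_dPp: "poly (pderiv (Pp a b c d)) t = 4*t^3 - 3*a*t^2 - 2*b*t - c"
  by (simp add: Pp_def pderiv_pCons algebra_simps power_def)

lemma poly_ddPp: "poly (pderiv (pderiv (Pp a b c d))) t = 12*t^2 - 6*a*t - 2*b"
  by (simp add: Pp_def pderiv_pCons algebra_simps power_def)

lemma Pp_G: "t > 0 \<Longrightarrow> poly (Pp a b c d) t = t * (G a b d t - c)"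
  by (simp add: poly_Pp G_def field_simps power_def)

lemma dPp_G: "t > 0 \<Longrightarrow> poly (pderiv (Pp a b c d)) t = R a b d t / t + G a b d t - c"
  by (simp add: poly_dPp G_def R_def field_simps power_def)

lemma touches_iff: "t > 0 \<Longrightarrow> touches (Pp a b c d) t \<longleftrightarrow> G a b d t = c \<and> R a b d t = 0"
  using Pp_G[of t a b c d] dPp_G[of t a b c d] by (auto simp: touches_def)

lemma equilibria_G: "equilibria a b c d = {t. t > 0 \<and> G a b d t = c}"
proof -
  have "phi a b c d t = t \<longleftrightarrow> G a b d t = c" if "t > 0" for t
  proof -
    have "phi a b c d t = t \<longleftrightarrow> a*t^3 + b*t^2 + c*t + d = t^4"
      using that by (simp add: phi_def field_simps power_def) 
    also have "\<dots> \<longleftrightarrow> poly (Pp a b c d) t = 0" by (simp add: poly_Pp) linarith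
    also have "\<dots> \<longleftrightarrow> G a b d t = c" using Pp_G[OF that] that by simp
    finally show ?thesis .
  qed
  thus ?thesis unfolding equilibria_def by auto
qed

lemma G_deriv: "t > 0 \<Longrightarrow> (G a b d has_real_derivative R a b d t / t^2) (at t)"
proof -
  assume t: "t > 0"
  have "(G a b d has_real_derivative (3*t^2 - 2*a*t - b + d/t^2)) (at t)"
    unfolding G_def using t
    by (auto intro!: derivative_eq_intros simp: field_simps power_def)
  moreover have "3*t^2 - 2*a*t - b + d/t^2 = R a b d t / t^2"
    using t by (simp add: R_def field_simps power_def)
  ultimately show ?thesis by simp
qed

lemma G_cont: "0 < x \<Longrightarrow> continuous_on {x..y} (G a b d)"
  unfolding G_def by (auto intro!: continuous_intros)

lemma G_inc: "0 < x \<Longrightarrow> x < y \<Longrightarrow> (\<And>t. x < t \<Longrightarrow> t < y \<Longrightarrow> R a b d t > 0) \<Longrightarrow> G a b d x < G a b d y"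
  proof (rule DERIV_pos_imp_increasing_open[of x y "G a b d"])
  fix t assume "0 < x" "x < t" "t < y" "(\<And>t. x < t \<Longrightarrow> t < y \<Longrightarrow> R a b d t > 0)"
  thus "\<exists>z. (G a b d has_real_derivative z) (at t) \<and> z > 0"
    using G_deriv[of t a b d] by (intro exI[of _ "R a b d t / t^2"]) auto
qed (auto intro!: G_cont)

lemma G_dec: "0 < x \<Longrightarrow> x < y \<Longrightarrow> (\<And>t. x < t \<Longrightarrow> t < y \<Longrightarrow> R a b d t < 0) \<Longrightarrow> G a b d x > G a b d y"
  proof (rule DERIV_neg_imp_decreasing_open[of x y "G a b d"])
  fix t assume "0 < x" "x < t" "t < y" "(\<And>t. x < t \<Longrightarrow> t < y \<Longrightarrow> R a b d t < 0)"
  thus "\<exists>z. (G a b d has_real_derivative z) (at t) \<and> z < 0"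
    using G_deriv[of t a b d] by (intro exI[of _ "R a b d t / t^2"]) (auto simp: divide_neg_pos)
qed (auto intro!: G_cont)

lemma R_deriv: "(R a b d has_real_derivative t * (12*t^2 - 6*a*t - 2*b)) (at t)"
  unfolding R_def by (auto intro!: derivative_eq_intros simp: algebra_simps power_def)

lemma R_cont: "continuous_on S (R a b d)"
  unfolding R_def by (auto intro!: continuous_intros)

lemma q_neg: fixes a b t t2 :: real assumes "b > 0" "t2 > 0" "12*t2^2 - 6*a*t2 - 2*b = 0" "0 < t" "t < t2"
  shows "12*t^2 - 6*a*t - 2*b < 0"
proof -
  have "t2*(12*t2 - 6*a) = 2*b" using assms(3) by (simp add: algebra_simps power2_eq_square)
  hence "0 < t2*(12*t2 - 6*a)" using assms by simp
  hence "12*t2 > 6*a" using assms zero_less_mult_pos by fastforce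
  hence "(t - t2)*(12*(t+t2) - 6*a) < 0" using assms by (intro mult_neg_pos) auto
  thus ?thesis using assms(3) by (simp add: algebra_simps power2_eq_square)
qed

lemma q_pos: fixes a b t t2 :: real assumes "b > 0" "t2 > 0" "12*t2^2 - 6*a*t2 - 2*b = 0" "t2 < t"
  shows "12*t^2 - 6*a*t - 2*b > 0"
proof -
  have "t2*(12*t2 - 6*a) = 2*b" using assms(3) by (simp add: algebra_simps power2_eq_square)
  hence "0 < t2*(12*t2 - 6*a)" using assms by simp
  hence "12*t2 > 6*a" using assms zero_less_mult_pos by fastforce
  hence "(t - t2)*(12*(t+t2) - 6*a) > 0" using assms by (intro mult_pos_pos) auto
  thus ?thesis using assms(3) by (simp add: algebra_simps power2_eq_square)
qed

lemma R_dec: assumes "b > 0" "t2 > 0" "12*t2^2 - 6*a*t2 - 2*b = 0" "0 \<le> x" "x < y" "y \<le> t2"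
  shows "R a b d x > R a b d y"
proof (rule DERIV_neg_imp_decreasing_open[of x y "R a b d"])
  fix t assume "x < t" "t < y"
  hence "12*t^2 - 6*a*t - 2*b < 0" using q_neg[OF assms(1-3), of t] assms by auto
  hence "t * (12*t^2 - 6*a*t - 2*b) < 0" using \<open>x < t\<close> assms by (intro mult_pos_neg) auto
  thus "\<exists>z. (R a b d has_real_derivative z) (at t) \<and> z < 0" using R_deriv by blast
qed (use assms in \<open>auto intro!: R_cont\<close>)

lemma R_inc: assumes "b > 0" "t2 > 0" "12*t2^2 - 6*a*t2 - 2*b = 0" "t2 \<le> x" "x < y"
  shows "R a b d x < R a b d y"
proof (rule DERIV_pos_imp_increasing_open[of x y "R a b d"])
  fix t assume "x < t" "t < y"
  hence "12*t^2 - 6*a*t - 2*b > 0" using q_pos[OF assms(1-3), of t] assms by auto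
  hence "t * (12*t^2 - 6*a*t - 2*b) > 0" using \<open>x < t\<close> assms by (intro mult_pos_pos) auto
  thus "\<exists>z. (R a b d has_real_derivative z) (at t) \<and> z > 0" using R_deriv by blast
qed (use assms in \<open>auto intro!: R_cont\<close>)

lemma R_big: fixes a b d t :: real assumes "a > 0" "b > 0" "d > 0" "t \<ge> a + b + 1" shows "R a b d t > 0"
proof -
  have t1: "t \<ge> 1" "3*t - 2*a \<ge> a + 3*b + 3" using assms by auto
  have "t*(3*t - 2*a) \<ge> 1*(3*t-2*a)" using t1 assms by (intro mult_right_mono) auto
  hence "3*t^2 - 2*a*t - b > 0" using t1 assms by (simp add: algebra_simps power2_eq_square)
  hence "t^2 * (3*t^2 - 2*a*t - b) > 0" using assms by (intro mult_pos_pos) auto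
  thus ?thesis using assms unfolding R_def by (simp add: algebra_simps power_def)
qed

lemma P_big: fixes a b c d t :: real assumes "a > 0" "b > 0" "d > 0" "t \<ge> a + b + \<bar>c\<bar> + d + 1"
  shows "poly (Pp a b c d) t > 0"
proof -
  have t1: "t \<ge> 1" using assms by auto
  have "t^3 * (t - a - b - \<bar>c\<bar> - d) > 0" using assms by (intro mult_pos_pos) auto
  moreover have "b*t^2 \<le> b*t^3" using t1 assms by (intro mult_left_mono) (auto simp: power_increasing)
  moreover have "c*t \<le> \<bar>c\<bar>*t^3"
  proof -
    have "c*t \<le> \<bar>c\<bar>*t" using t1 by (intro mult_right_mono) auto
    also have "\<dots> \<le> \<bar>c\<bar>*t^3" using t1 power_increasing[of 1 3 t] by (intro mult_left_mono) auto
    finally show ?thesis .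
  qed
  moreover have "d \<le> d*t^3" using t1 assms by (simp add: one_le_power)
  ultimately show ?thesis unfolding poly_Pp by (simp add: algebra_simps power_def) 
qed

lemma E_pos: fixes x T a b :: real
  assumes x: "x > 0" and T: "T > 0" and a: "a > 0" and b: "b > 0" and q: "6*T^2 < 3*a*T + b"
  shows "(x-T)^2*(a*(x+2*T)+b) + T^3*(4*x-3*T) > 0"
proof (cases "x \<ge> T")
  case True
  have "(x-T)^2*(a*(x+2*T)+b) \<ge> 0" using x T a b by (intro mult_nonneg_nonneg) auto
  moreover have "T^3*(4*x-3*T) > 0" using True T by (intro mult_pos_pos) auto
  ultimately show ?thesis by linarith
next
  case False
  have s: "(x-T)^2 \<ge> 0" by simp
  show ?thesis
  proof (cases "a \<le> 3*T")
    case True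
    have p: "(3*T-a)*(T-x) \<ge> 0" using True False by (intro mult_nonneg_nonneg) auto
    have h1: "a*(x+2*T)+b \<ge> 3*T*(x+T)" using p q by (simp add: algebra_simps power2_eq_square)
    have "(x-T)^2*(a*(x+2*T)+b) \<ge> (x-T)^2*(3*T*(x+T))" using h1 s by (rule mult_left_mono)
    moreover have "(x-T)^2*(3*T*(x+T)) + T^3*(4*x-3*T) = T*x*(3*x^2-3*x*T+T^2)"
      by (simp add: algebra_simps power2_eq_square power3_eq_cube)
    moreover have "3*x^2-3*x*T+T^2 > 0"
    proof -
      have "3*x^2-3*x*T+T^2 = 3*(x - T/2)^2 + T^2/4" by (simp add: algebra_simps power2_eq_square)
      moreover have "T^2/4 > 0" using T by simp
      moreover have "3*(x - T/2)^2 \<ge> 0" by simp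
      ultimately show ?thesis by linarith
    qed
    hence "T*x*(3*x^2-3*x*T+T^2) > 0" using x T by simp
    ultimately show ?thesis by linarith
  next
    case aT: False
    have h1: "a*(x+2*T)+b \<ge> 3*T*(x+2*T)"
    proof -
      have "a*(x+2*T) \<ge> 3*T*(x+2*T)" using aT x T by (intro mult_right_mono) auto
      thus ?thesis using b by linarith
    qed
    have "(x-T)^2*(a*(x+2*T)+b) \<ge> (x-T)^2*(3*T*(x+2*T))" using h1 s by (rule mult_left_mono)
    moreover have "32*((x-T)^2*(3*T*(x+2*T)) + T^3*(4*x-3*T)) = T*(3*(4*x-3*T)^2*(2*x+3*T) + 2*x*T^2 + 15*T^3)"
      by (simp add: algebra_simps power2_eq_square power3_eq_cube)
    moreover have "3*(4*x-3*T)^2*(2*x+3*T) + 2*x*T^2 + 15*T^3 > 0"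
    proof -
      have "3*(4*x-3*T)^2*(2*x+3*T) \<ge> 0" using x T by (intro mult_nonneg_nonneg) auto
      moreover have "2*x*T^2 > 0" "15*T^3 > 0" using x T by auto
      ultimately show ?thesis by linarith
    qed
    hence "T*(3*(4*x-3*T)^2*(2*x+3*T) + 2*x*T^2 + 15*T^3) > 0" using T by simp
    ultimately show ?thesis by (smt (verit))
  qed
qed

lemma Q_c0: fixes a b d x :: real assumes "d = 2*a*x^3 + b*x^2"
  shows "4*a*(-3*a*x^2 - 2*b*x)^3 - b^2*(-3*a*x^2 - 2*b*x)^2 - 18*a*b*d*(-3*a*x^2 - 2*b*x) + 27*a^2*d^2 + 4*d*b^3 = 0"
  unfolding assms by (simp add: algebra_simps power2_eq_square power3_eq_cube)

lemma H_C: fixes a b t :: real assumes "12*t^2 - 6*a*t - 2*b = 0"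
  shows "108*(4*t^3 - 3*a*t^2 - 2*b*t)^2 + (108*a*b + 27*a^3)*(4*t^3 - 3*a*t^2 - 2*b*t) - 9*a^2*b^2 - 32*b^3 = 0"
  using assms by algebra


lemma t2_ex: fixes a b :: real assumes "a > 0" "b > 0"
  shows "\<exists>t2>0. 12*t2^2 - 6*a*t2 - 2*b = 0"
proof -
  define s where "s = sqrt (36*a^2 + 96*b)"
  have nn: "0 \<le> 36*a^2 + 96*b" using assms by (intro add_nonneg_nonneg) auto
  hence s2: "s^2 = 36*a^2 + 96*b" unfolding s_def by (rule real_sqrt_pow2)
  have "s \<ge> 0" unfolding s_def using nn by simp
  hence "(6*a + s)/24 > 0" using assms by simp
  moreover have "12*((6*a + s)/24)^2 - 6*a*((6*a + s)/24) - 2*b = 0"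
    using s2 by (simp add: field_simps power2_eq_square)
  ultimately show ?thesis by blast
qed

lemma R_signs:
  fixes a b d t2 :: real
  assumes a: "a > 0" and b: "b > 0" and d: "d > 0" and t2: "t2 > 0" "12*t2^2 - 6*a*t2 - 2*b = 0"
    and neg: "R a b d t2 < 0"
  obtains tM tm where "0 < tM" "tM < t2" "t2 < tm" "R a b d tM = 0" "R a b d tm = 0"
    "\<And>t. 0 < t \<Longrightarrow> t < tM \<Longrightarrow> R a b d t > 0"
    "\<And>t. tM < t \<Longrightarrow> t < tm \<Longrightarrow> R a b d t < 0"
    "\<And>t. tm < t \<Longrightarrow> R a b d t > 0"
proof -
  have R0: "R a b d 0 = d" unfolding R_def by simp
  obtain tM where tM: "0 \<le> tM" "tM \<le> t2" "R a b d tM = 0"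
    using IVT2'[of "R a b d" t2 0 0] neg R0 d t2 R_cont by force
  have tMp: "0 < tM" "tM < t2" using tM R0 d neg by (auto simp: order_le_less)
  define B where "B = t2 + a + b + 1"
  have RB: "R a b d B > 0" using R_big[of a b d B] a b d t2 unfolding B_def by auto
  obtain tm where tm: "t2 \<le> tm" "tm \<le> B" "R a b d tm = 0"
    using IVT'[of "R a b d" t2 0 B] neg RB R_cont a b t2 unfolding B_def by force
  have tmp: "t2 < tm" using tm neg by (auto simp: order_le_less)
  show ?thesis
  proof (rule that[OF tMp tmp tM(3) tm(3)])
    fix t assume "0 < t" "t < tM"
    thus "R a b d t > 0" using R_dec[OF b t2, of t tM d] tM tMp by auto
  next
    fix t assume h: "tM < t" "t < tm"
    show "R a b d t < 0"
    proof (cases "t \<le> t2")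
      case True thus ?thesis using R_dec[OF b t2, of tM t d] tM tMp h by auto
    next
      case False thus ?thesis using R_inc[OF b t2, of t tm d] tm h by auto
    qed
  next
    fix t assume "tm < t"
    thus "R a b d t > 0" using R_inc[OF b t2, of tm t d] tm tmp by auto
  qed
qed

lemma G_at_R0: "t > 0 \<Longrightarrow> R a b d t = 0 \<Longrightarrow> G a b d t = 4*t^3 - 3*a*t^2 - 2*b*t"
  unfolding G_def R_def by (simp add: field_simps power_def)

lemma G_at_R0': "t > 0 \<Longrightarrow> R a b d t = 0 \<Longrightarrow> 3*t*G a b d t = -(a*t^3 + 2*b*t^2 + 4*d)"
  unfolding G_def R_def by (simp add: field_simps power_def) algebra

lemma root_exists:
  fixes a b c d x y :: real
  assumes "0 \<le> x" "x < y" "poly (Pp a b c d) x * poly (Pp a b c d) y < 0"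
  shows "\<exists>r. x < r \<and> r < y \<and> G a b d r = c"
proof -
  have "\<exists>r. x < r \<and> r < y \<and> poly (Pp a b c d) r = 0"
  proof (cases "poly (Pp a b c d) x < 0")
    case True
    hence "poly (Pp a b c d) y > 0" using assms(3) by (simp add: mult_less_0_iff)
    thus ?thesis using poly_IVT_pos[OF assms(2) True] by blast
  next
    case False
    hence "poly (Pp a b c d) x > 0" "poly (Pp a b c d) y < 0" using assms(3) by (auto simp: mult_less_0_iff)
    thus ?thesis using poly_IVT_neg[OF assms(2)] by blast
  qed
  then obtain r where r: "x < r" "r < y" "poly (Pp a b c d) r = 0" by blast
  hence "r > 0" using assms by auto
  hence "G a b d r = c" using r Pp_G[of r a b c d] by simp
  thus ?thesis using r by blast
qed

lemma P0: "poly (Pp a b c d) 0 = -d" by (simp add: poly_Pp)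


lemma phi_deriv:
  fixes a b c d t :: real
  assumes t: "t > 0" and tc: "touches (Pp a b c d) t"
  shows "(phi a b c d has_real_derivative 1) (at t)"
proof -
  have N: "a*t^3+b*t^2+c*t+d = t^4" using tc by (simp add: touches_def poly_Pp)
  have N': "3*a*t^2+2*b*t+c = 4*t^3" using tc by (simp add: touches_def poly_dPp)
  have eq: "phi a b c d = (\<lambda>x. (a*x^3+b*x^2+c*x+d)/x^3)" by (rule ext) (simp add: phi_def)
  have d1: "((\<lambda>x. a*x^3+b*x^2+c*x+d) has_real_derivative (3*a*t^2+2*b*t+c)) (at t)"
    by (auto intro!: derivative_eq_intros simp: algebra_simps power2_eq_square)
  have d2: "((\<lambda>x. x^3) has_real_derivative (3*t^2)) (at t)"
    by (auto intro!: derivative_eq_intros simp: algebra_simps power2_eq_square)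
  have D: "((\<lambda>x. (a*x^3+b*x^2+c*x+d)/x^3) has_real_derivative
      (((3*a*t^2+2*b*t+c)*t^3 - (a*t^3+b*t^2+c*t+d)*(3*t^2))/(t^3*t^3))) (at t)"
    using DERIV_divide[OF d1 d2] t by simp
  have X: "((3*a*t^2+2*b*t+c)*t^3 - (a*t^3+b*t^2+c*t+d)*(3*t^2))/(t^3*t^3) = 1"
    unfolding N N' using t by (simp add: field_simps power_def)
  show ?thesis unfolding eq using D unfolding X .
qed

lemma Q_uniq:
  fixes a b d x y :: real
  assumes a: "a > 0" and b: "b > 0" and d: "d > 0" and x: "x < 0" and y: "y < 0"
    and Qx: "Qf a b d x = 0" and Qy: "Qf a b d y = 0"
  shows "x = y"
proof -
  have key: "\<not> (u < v)" if hu: "u < 0" "v < 0" "Qf a b d u = 0" "Qf a b d v = 0" for u v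
  proof
    assume uv: "u < v"
    have idQ: "u * Qf a b d v - v * Qf a b d u - (u - v)*(27*a^2*d^2 + 4*d*b^3) = u * v * (v-u)*(4*a*(u+v) - b^2)"
      unfolding Qf_def by algebra
    have "(v - u)*(27*a^2*d^2 + 4*d*b^3) > 0" using uv a b d by (intro mult_pos_pos add_pos_pos) auto
    moreover have "u * v * (v-u)*(4*a*(u+v) - b^2) < 0"
    proof -
      have "u * v > 0" using hu by (simp add: mult_neg_neg)
      hence "u * v * (v-u) > 0" using uv by simp
      moreover have "4*a*(u+v) - b^2 < 0"
      proof -
        have "4*a*(u+v) < 0" using a hu by (simp add: mult_pos_neg)
        moreover have "b^2 > 0" using b by simp
        ultimately show ?thesis by linarith
      qed
      ultimately show ?thesis by (simp add: mult_pos_neg)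
    qed
    ultimately show False using idQ hu by (simp add: algebra_simps)
  qed
  show ?thesis using key[OF x y Qx Qy] key[OF y x Qy Qx] by linarith
qed

lemma H_uniq:
  fixes a b x y :: real
  assumes a: "a > 0" and b: "b > 0" and x: "x < 0" and y: "y < 0"
    and Hx: "Hf a b x = 0" and Hy: "Hf a b y = 0"
  shows "x = y"
proof (rule ccontr)
  assume ne: "x \<noteq> y"
  have "(x - y) * (108*(x+y) + 108*a*b + 27*a^3) = Hf a b x - Hf a b y"
    unfolding Hf_def by algebra
  hence "(x - y) * (108*(x+y) + 108*a*b + 27*a^3) = 0" using Hx Hy by simp
  hence s: "108*(x+y) + 108*a*b + 27*a^3 = 0" using ne by simp
  have "Hf a b x = -108*x*y - 9*a^2*b^2 - 32*b^3 + x*(108*(x+y) + 108*a*b + 27*a^3)"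
    unfolding Hf_def by algebra
  hence e: "108*x*y = - 9*a^2*b^2 - 32*b^3" using Hx s by simp
  have "x*y > 0" using x y by (simp add: mult_neg_neg)
  moreover have "9*a^2*b^2 + 32*b^3 > 0" using a b by (intro add_pos_pos) auto
  ultimately show False using e by linarith
qed

lemma card_one:
  fixes a b c d :: real
  assumes a: "a > 0" and b: "b > 0" and d: "d > 0"
    and mono: "\<And>x y. 0 < x \<Longrightarrow> x < y \<Longrightarrow> G a b d x < G a b d y"
  shows "card (equilibria a b c d) = 1"
proof -
  define B where "B = a + b + \<bar>c\<bar> + d + 1"
  have "poly (Pp a b c d) 0 * poly (Pp a b c d) B < 0"
    using P_big[of a b d c B] a b d unfolding B_def P0 by (simp add: mult_neg_pos)
  moreover have "0 < B" using a b d unfolding B_def by auto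
  ultimately obtain r where r: "0 < r" "r < B" "G a b d r = c"
    using root_exists[of 0 B a b c d] by auto
  have "equilibria a b c d = {r}"
  proof -
    have "t = r" if "t > 0" "G a b d t = c" for t
    proof (rule ccontr)
      assume "t \<noteq> r"
      thus False
      proof (rule linorder_neqE)
        assume "t < r" thus False using mono[of t r] that r by simp
      next
        assume "r < t" thus False using mono[of r t] that r by simp
      qed
    qed
    thus ?thesis unfolding equilibria_G using r by blast
  qed
  thus ?thesis by simp
qed



locale twocrit =
  fixes a b d tM tm :: real
  assumes a: "a > 0" and b: "b > 0" and d: "d > 0" and tM: "0 < tM" and tMm: "tM < tm"
    and RtM: "R a b d tM = 0" and Rtm: "R a b d tm = 0"
    and S1: "\<And>t. 0 < t \<Longrightarrow> t < tM \<Longrightarrow> R a b d t > 0"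
    and S2: "\<And>t. tM < t \<Longrightarrow> t < tm \<Longrightarrow> R a b d t < 0"
    and S3: "\<And>t. tm < t \<Longrightarrow> R a b d t > 0"
begin

abbreviation "g \<equiv> G a b d"
abbreviation "cM \<equiv> G a b d tM"
abbreviation "cm \<equiv> G a b d tm"

lemma M1: "0 < x \<Longrightarrow> x < y \<Longrightarrow> y \<le> tM \<Longrightarrow> g x < g y"
  by (rule G_inc) (auto intro!: S1)
lemma M2: "tM \<le> x \<Longrightarrow> x < y \<Longrightarrow> y \<le> tm \<Longrightarrow> g y < g x"
  using tM by (intro G_dec) (auto intro!: S2)
lemma M3: "tm \<le> x \<Longrightarrow> x < y \<Longrightarrow> g x < g y"
  using tM tMm by (intro G_inc) (auto intro!: S3)

lemma cm_lt_cM: "cm < cM" using M2[of tM tm] tMm by simp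

lemma U1: "0 < x \<Longrightarrow> x \<le> tM \<Longrightarrow> 0 < y \<Longrightarrow> y \<le> tM \<Longrightarrow> g x = g y \<Longrightarrow> x = y"
  using M1[of x y] M1[of y x] by (cases x y rule: linorder_cases) auto
lemma U2: "tM \<le> x \<Longrightarrow> x \<le> tm \<Longrightarrow> tM \<le> y \<Longrightarrow> y \<le> tm \<Longrightarrow> g x = g y \<Longrightarrow> x = y"
  using M2[of x y] M2[of y x] by (cases x y rule: linorder_cases) auto
lemma U3: "tm \<le> x \<Longrightarrow> tm \<le> y \<Longrightarrow> g x = g y \<Longrightarrow> x = y"
  using M3[of x y] M3[of y x] by (cases x y rule: linorder_cases) auto

lemma le_cM: "0 < t \<Longrightarrow> t < tm \<Longrightarrow> g t \<le> cM"
proof -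
  assume t: "0 < t" "t < tm"
  show ?thesis
  proof (cases t tM rule: linorder_cases)
    case less thus ?thesis using M1[of t tM] t by simp
  next
    case greater thus ?thesis using M2[of tM t] t by simp
  qed simp
qed

lemma ge_cm: "tM < t \<Longrightarrow> cm \<le> g t"
proof -
  assume t: "tM < t"
  show ?thesis
  proof (cases t tm rule: linorder_cases)
    case less thus ?thesis using M2[of t tm] t by simp
  next
    case greater thus ?thesis using M3[of tm t] t by simp
  qed simp
qed

lemma R_zero: "0 < t \<Longrightarrow> R a b d t = 0 \<Longrightarrow> t = tM \<or> t = tm"
  using S1[of t] S2[of t] S3[of t] by (cases t tM rule: linorder_cases; cases t tm rule: linorder_cases) auto

lemma PtM: "poly (Pp a b c d) tM = tM * (cM - c)" using Pp_G[OF tM] by simp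
lemma Ptm: "poly (Pp a b c d) tm = tm * (cm - c)" using Pp_G[of tm] tM tMm by simp

lemma P_big': "\<exists>B>tm. poly (Pp a b c d) B > 0"
proof -
  define B where "B = a + b + \<bar>c\<bar> + d + 1 + tm"
  have "poly (Pp a b c d) B > 0" using P_big[of a b d c B] a b d tM tMm unfolding B_def by auto
  moreover have "B > tm" unfolding B_def using a b d by auto
  ultimately show ?thesis by blast
qed

lemma root_hi: "c > cm \<Longrightarrow> \<exists>r. tm < r \<and> g r = c"
proof -
  assume c: "c > cm"
  obtain B where B: "B > tm" "poly (Pp a b c d) B > 0" using P_big' by blast
  have "poly (Pp a b c d) tm < 0" unfolding Ptm using c tM tMm by (intro mult_pos_neg) auto
  hence "poly (Pp a b c d) tm * poly (Pp a b c d) B < 0" using B by (simp add: mult_neg_pos)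
  thus ?thesis using root_exists[of tm B a b c d] tM tMm B by auto
qed

lemma root_lo: "c < cM \<Longrightarrow> \<exists>r. 0 < r \<and> r < tM \<and> g r = c"
proof -
  assume c: "c < cM"
  have "poly (Pp a b c d) tM > 0" unfolding PtM using c tM by (intro mult_pos_pos) auto
  hence "poly (Pp a b c d) 0 * poly (Pp a b c d) tM < 0" using d by (simp add: P0 mult_neg_pos)
  thus ?thesis using root_exists[of 0 tM a b c d] tM by auto
qed

lemma root_mid: "cm < c \<Longrightarrow> c < cM \<Longrightarrow> \<exists>r. tM < r \<and> r < tm \<and> g r = c"
proof -
  assume c: "cm < c" "c < cM"
  have "poly (Pp a b c d) tM > 0" unfolding PtM using c tM by (intro mult_pos_pos) auto
  moreover have "poly (Pp a b c d) tm < 0" unfolding Ptm using c tM tMm by (intro mult_pos_neg) auto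
  ultimately have "poly (Pp a b c d) tM * poly (Pp a b c d) tm < 0" by (simp add: mult_pos_neg)
  thus ?thesis using root_exists[of tM tm a b c d] tM tMm by auto
qed

lemma classify: "0 < t \<Longrightarrow> g t = c \<Longrightarrow>
   (t < tM \<and> c < cM) \<or> (t = tM \<and> c = cM) \<or> (tM < t \<and> t < tm \<and> cm < c \<and> c < cM)
   \<or> (t = tm \<and> c = cm) \<or> (tm < t \<and> cm < c)"
  using M1[of t tM] M2[of tM t] M2[of t tm] M3[of tm t]
  by (cases t tM rule: linorder_cases; cases t tm rule: linorder_cases) (use tMm in auto)

lemma K3: assumes "cm < c" "c < cM" shows "card (equilibria a b c d) = 3"
proof -
  obtain r1 where r1: "0 < r1" "r1 < tM" "g r1 = c" using root_lo assms by blast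
  obtain r2 where r2: "tM < r2" "r2 < tm" "g r2 = c" using root_mid assms by blast
  obtain r3 where r3: "tm < r3" "g r3 = c" using root_hi assms by blast
  have "equilibria a b c d = {r1, r2, r3}"
  proof
    show "equilibria a b c d \<subseteq> {r1, r2, r3}"
    proof
      fix t assume "t \<in> equilibria a b c d"
      hence t: "0 < t" "g t = c" unfolding equilibria_G by auto
      from classify[OF t] assms consider "t < tM" | "tM < t" "t < tm" | "tm < t" by auto
      thus "t \<in> {r1, r2, r3}"
      proof cases
        case 1 thus ?thesis using U1[of t r1] t r1 by auto
      next
        case 2 thus ?thesis using U2[of t r2] t r2 by auto
      next
        case 3 thus ?thesis using U3[of t r3] t r3 by auto
      qed
    qed
  next
    show "{r1, r2, r3} \<subseteq> equilibria a b c d" unfolding equilibria_G using r1 r2 r3 tM by auto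
  qed
  moreover have "r1 \<noteq> r2" "r1 \<noteq> r3" "r2 \<noteq> r3" using r1 r2 r3 by auto
  ultimately show ?thesis by simp
qed

lemma K1lo: assumes "c < cm" shows "card (equilibria a b c d) = 1"
proof -
  have cc: "c < cM" using assms cm_lt_cM by simp
  obtain r1 where r1: "0 < r1" "r1 < tM" "g r1 = c" using root_lo cc by blast
  have "equilibria a b c d = {r1}"
  proof
    show "equilibria a b c d \<subseteq> {r1}"
    proof
      fix t assume "t \<in> equilibria a b c d"
      hence t: "0 < t" "g t = c" unfolding equilibria_G by auto
      from classify[OF t] assms cc have "t < tM" by auto
      thus "t \<in> {r1}" using U1[of t r1] t r1 by auto
    qed
  next
    show "{r1} \<subseteq> equilibria a b c d" unfolding equilibria_G using r1 by auto
  qed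
  thus ?thesis by simp
qed

lemma K1hi: assumes "c > cM" shows "card (equilibria a b c d) = 1"
proof -
  have cc: "c > cm" using assms cm_lt_cM by simp
  obtain r3 where r3: "tm < r3" "g r3 = c" using root_hi cc by blast
  have "equilibria a b c d = {r3}"
  proof
    show "equilibria a b c d \<subseteq> {r3}"
    proof
      fix t assume "t \<in> equilibria a b c d"
      hence t: "0 < t" "g t = c" unfolding equilibria_G by auto
      from classify[OF t] assms cc have "tm < t" by auto
      thus "t \<in> {r3}" using U3[of t r3] t r3 by auto
    qed
  next
    show "{r3} \<subseteq> equilibria a b c d" unfolding equilibria_G using r3 tM tMm by auto
  qed
  thus ?thesis by simp
qed

lemma K2m: "card (equilibria a b cm d) = 2 \<and> tm \<in> equilibria a b cm d \<and>
   (\<forall>t\<in>equilibria a b cm d. t \<noteq> tm \<longrightarrow> t < tm)"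
proof -
  have cc: "cm < cM" using cm_lt_cM .
  obtain r1 where r1: "0 < r1" "r1 < tM" "g r1 = cm" using root_lo cc by blast
  have "equilibria a b cm d = {r1, tm}"
  proof
    show "equilibria a b cm d \<subseteq> {r1, tm}"
    proof
      fix t assume "t \<in> equilibria a b cm d"
      hence t: "0 < t" "g t = cm" unfolding equilibria_G by auto
      from classify[OF t] cc have "t < tM \<or> t = tm" by auto
      thus "t \<in> {r1, tm}" using U1[of t r1] t r1 by auto
    qed
  next
    show "{r1, tm} \<subseteq> equilibria a b cm d" unfolding equilibria_G using r1 tM tMm by auto
  qed
  moreover have "r1 \<noteq> tm" using r1 tMm by auto
  ultimately show ?thesis using r1 tMm by auto
qed

lemma K2M: "card (equilibria a b cM d) = 2 \<and> tM \<in> equilibria a b cM d \<and>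
   (\<forall>t\<in>equilibria a b cM d. t \<noteq> tM \<longrightarrow> tM < t)"
proof -
  have cc: "cm < cM" using cm_lt_cM .
  obtain r3 where r3: "tm < r3" "g r3 = cM" using root_hi cc by blast
  have "equilibria a b cM d = {tM, r3}"
  proof
    show "equilibria a b cM d \<subseteq> {tM, r3}"
    proof
      fix t assume "t \<in> equilibria a b cM d"
      hence t: "0 < t" "g t = cM" unfolding equilibria_G by auto
      from classify[OF t] cc have "t = tM \<or> tm < t" by auto
      thus "t \<in> {tM, r3}" using U3[of t r3] t r3 by auto
    qed
  next
    show "{tM, r3} \<subseteq> equilibria a b cM d" unfolding equilibria_G using r3 tM tMm by auto
  qed
  moreover have "r3 \<noteq> tM" using r3 tMm by auto
  ultimately show ?thesis using r3 tMm by auto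
qed

lemma touch_m: "touches (Pp a b cm d) tm" using touches_iff[of tm a b cm d] tM tMm Rtm by auto
lemma touch_M: "touches (Pp a b cM d) tM" using touches_iff[of tM a b cM d] tM RtM by auto

lemma touch_only: "0 < t \<Longrightarrow> touches (Pp a b c d) t \<Longrightarrow> (t = tM \<and> c = cM) \<or> (t = tm \<and> c = cm)"
  using touches_iff[of t a b c d] R_zero by auto

lemma locmin: "loc_min_pt (poly (Pp a b cm d)) tm"
  unfolding loc_min_pt_def eventually_nhds
proof (intro exI[of _ "{tM<..}"] conjI ballI)
  fix y assume y: "y \<in> {tM<..}"
  have "poly (Pp a b cm d) tm = 0" using touch_m by (simp add: touches_def)
  moreover have "poly (Pp a b cm d) y = y * (g y - cm)" using Pp_G[of y a b cm d] y tM by simp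
  moreover have "y * (g y - cm) \<ge> 0" using ge_cm[of y] y tM by simp
  ultimately show "poly (Pp a b cm d) tm \<le> poly (Pp a b cm d) y" by simp
qed (use tMm in auto)

lemma locmax: "loc_max_pt (poly (Pp a b cM d)) tM"
  unfolding loc_max_pt_def eventually_nhds
proof (intro exI[of _ "{0<..<tm}"] conjI ballI)
  fix y assume y: "y \<in> {0<..<tm}"
  have "poly (Pp a b cM d) tM = 0" using touch_M by (simp add: touches_def)
  moreover have "poly (Pp a b cM d) y = y * (g y - cM)" using Pp_G[of y a b cM d] y by simp
  moreover have "y * (g y - cM) \<le> 0" using le_cM[of y] y by (simp add: mult_nonneg_nonpos)
  ultimately show "poly (Pp a b cM d) y \<le> poly (Pp a b cM d) tM" by simp
qed (use tM tMm in auto)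

end


theorem theorem2:
  fixes a b d cminus cb :: real
  assumes ha: "a > 0" and hb: "b > 0" and hd: "d > 0"
    and hcm: "cminus < 0" "Qf a b d cminus = 0"
    and hcb: "cb < 0" "Hf a b cb = 0"
  shows
   \<comment> \<open>(a)\<close>
   "(\<forall>c. cminus < c \<and> c < - sqrt (3*b*d) \<and> c = cb \<longrightarrow>
        (let ts = - (6*cb + a*b) / (3*a^2 + 8*b) in
          poly (pderiv (Pp a b c d)) ts = 0 \<and> poly (pderiv (pderiv (Pp a b c d))) ts = 0 \<and> ts > 0))
    \<and>
   \<comment> \<open>(b)\<close>
   (cb \<ge> (b^2 - 12*d) / (3*a) \<longrightarrow>
      (\<forall>c. cminus < c \<and> c < - sqrt (3*b*d) \<longrightarrow> card (equilibria a b c d) = 1))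
    \<and>
   \<comment> \<open>(c)\<close>
   (cb < (b^2 - 12*d) / (3*a) \<longrightarrow>
      (\<exists>cm cM tm tM.
         cb < cm \<and> cm < cM \<and> cM < - sqrt (3*b*d) \<and> cminus < cM \<and>
         0 < tM \<and> tM < tm \<and>
         touches (Pp a b cm d) tm \<and> loc_min_pt (poly (Pp a b cm d)) tm \<and>
         (\<forall>t>0. touches (Pp a b cm d) t \<longrightarrow> t = tm) \<and>
         touches (Pp a b cM d) tM \<and> loc_max_pt (poly (Pp a b cM d)) tM \<and>
         (\<forall>t>0. touches (Pp a b cM d) t \<longrightarrow> t = tM) \<and>
         (\<forall>c t. cb < c \<and> c < cm \<and> t > 0 \<longrightarrow> \<not> touches (Pp a b c d) t) \<and>
         (\<forall>c t. cm < c \<and> c < cM \<and> t > 0 \<longrightarrow> \<not> touches (Pp a b c d) t) \<and>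
         \<comment> \<open>(c1)\<close>
         (cminus \<le> cm \<longrightarrow>
            (\<forall>c. cm < c \<and> c < cM \<longrightarrow> card (equilibria a b c d) = 3) \<and>
            card (equilibria a b cm d) = 2 \<and> tm \<in> equilibria a b cm d \<and>
            (phi a b cm d has_real_derivative 1) (at tm) \<and>
            (\<forall>t\<in>equilibria a b cm d. t \<noteq> tm \<longrightarrow> t < tm) \<and>
            card (equilibria a b cM d) = 2 \<and> tM \<in> equilibria a b cM d \<and>
            (phi a b cM d has_real_derivative 1) (at tM) \<and>
            (\<forall>t\<in>equilibria a b cM d. t \<noteq> tM \<longrightarrow> tM < t) \<and>
            (\<forall>c. (cminus < c \<and> c < cm) \<or> (cM < c \<and> c < - sqrt (3*b*d)) \<longrightarrow>
                 card (equilibria a b c d) = 1)) \<and>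
         \<comment> \<open>(c2)\<close>
         (cm < cminus \<longrightarrow>
            (\<forall>c. cminus < c \<and> c < cM \<longrightarrow> card (equilibria a b c d) = 3) \<and>
            card (equilibria a b cM d) = 2 \<and> tM \<in> equilibria a b cM d \<and>
            (phi a b cM d has_real_derivative 1) (at tM) \<and>
            (\<forall>t\<in>equilibria a b cM d. t \<noteq> tM \<longrightarrow> tM < t) \<and>
            (\<forall>c. cM < c \<and> c < - sqrt (3*b*d) \<longrightarrow> card (equilibria a b c d) = 1))))"
proof -
  obtain t2 where t2: "t2 > 0" "12*t2^2 - 6*a*t2 - 2*b = 0" using t2_ex ha hb by blast
  have t2a: "12*t2 > 6*a"
  proof -
    have "t2*(12*t2 - 6*a) = 2*b" using t2(2) by (simp add: algebra_simps power2_eq_square)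
    hence "0 < t2*(12*t2 - 6*a)" using hb by simp
    thus ?thesis using t2 zero_less_mult_pos by fastforce
  qed
  define C where "C = 4*t2^3 - 3*a*t2^2 - 2*b*t2"
  have "3*C = -3*a*t2^2 - 4*b*t2" unfolding C_def using t2(2) by algebra
  moreover have "a*t2^2 > 0" "b*t2 > 0" using ha hb t2 by auto
  ultimately have Cneg: "C < 0" by linarith
  have HC: "Hf a b C = 0" using H_C[OF t2(2)] unfolding Hf_def C_def .
  have cbC: "cb = C" using H_uniq[OF ha hb hcb(1) Cneg hcb(2) HC] .
  have Rt2: "12 * R a b d t2 = 3*a*cb - b^2 + 12*d" using t2(2) unfolding cbC C_def R_def by algebra
  have tsC: "-(6*C + a*b) = t2*(3*a^2+8*b)" unfolding C_def using t2(2) by algebra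
  have den: "3*a^2+8*b > 0" using ha hb by (intro add_pos_pos) auto
  have ts: "-(6*cb + a*b)/(3*a^2+8*b) = t2" using tsC den unfolding cbC by (simp add: field_simps)
  have partA: "\<forall>c. cminus < c \<and> c < - sqrt (3*b*d) \<and> c = cb \<longrightarrow>
        (let ts = - (6*cb + a*b) / (3*a^2 + 8*b) in
          poly (pderiv (Pp a b c d)) ts = 0 \<and> poly (pderiv (pderiv (Pp a b c d))) ts = 0 \<and> ts > 0)"
    unfolding Let_def ts poly_dPp poly_ddPp using t2 unfolding cbC C_def by auto
  have Rcb: "R a b d t2 \<ge> 0 \<longleftrightarrow> cb \<ge> (b^2 - 12*d) / (3*a)"
  proof -
    have "(b^2 - 12*d)/(3*a) \<le> cb \<longleftrightarrow> b^2 - 12*d \<le> cb*(3*a)" using ha by (simp add: divide_le_eq)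
    also have "\<dots> \<longleftrightarrow> b^2 - 12*d \<le> 3*a*cb" by (simp add: algebra_simps)
    finally show ?thesis using Rt2 by (smt (verit))
  qed
  have partB: "cb \<ge> (b^2 - 12*d) / (3*a) \<longrightarrow>
      (\<forall>c. cminus < c \<and> c < - sqrt (3*b*d) \<longrightarrow> card (equilibria a b c d) = 1)"
  proof (intro impI allI)
    fix c assume "cb \<ge> (b^2 - 12*d) / (3*a)"
    hence R0: "R a b d t2 \<ge> 0" using Rcb by simp
    have Rpos: "R a b d t > 0" if "t > 0" "t \<noteq> t2" for t
    proof (cases "t < t2")
      case True thus ?thesis using R_dec[OF hb t2, of t t2 d] that R0 by auto
    next
      case False thus ?thesis using R_inc[OF hb t2, of t2 t d] that R0 by auto
    qed
    have mono: "G a b d x < G a b d y" if xy: "0 < x" "x < y" for x y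
    proof -
      have I: "G a b d u < G a b d v" if "0 < u" "u < v" "t2 \<notin> {u<..<v}" for u v
        using that by (intro G_inc) (auto intro!: Rpos)
      show ?thesis
      proof (cases "t2 \<in> {x<..<y}")
        case True
        hence "G a b d x < G a b d t2" "G a b d t2 < G a b d y" using xy by (auto intro!: I)
        thus ?thesis by simp
      next
        case False thus ?thesis using I xy by simp
      qed
    qed
    show "card (equilibria a b c d) = 1"
      using card_one[OF ha hb hd mono] by blast
  qed
  have partC: "cb < (b^2 - 12*d) / (3*a) \<longrightarrow>
      (\<exists>cm cM tm tM.
         cb < cm \<and> cm < cM \<and> cM < - sqrt (3*b*d) \<and> cminus < cM \<and>
         0 < tM \<and> tM < tm \<and>
         touches (Pp a b cm d) tm \<and> loc_min_pt (poly (Pp a b cm d)) tm \<and>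
         (\<forall>t>0. touches (Pp a b cm d) t \<longrightarrow> t = tm) \<and>
         touches (Pp a b cM d) tM \<and> loc_max_pt (poly (Pp a b cM d)) tM \<and>
         (\<forall>t>0. touches (Pp a b cM d) t \<longrightarrow> t = tM) \<and>
         (\<forall>c t. cb < c \<and> c < cm \<and> t > 0 \<longrightarrow> \<not> touches (Pp a b c d) t) \<and>
         (\<forall>c t. cm < c \<and> c < cM \<and> t > 0 \<longrightarrow> \<not> touches (Pp a b c d) t) \<and>
         (cminus \<le> cm \<longrightarrow>
            (\<forall>c. cm < c \<and> c < cM \<longrightarrow> card (equilibria a b c d) = 3) \<and>
            card (equilibria a b cm d) = 2 \<and> tm \<in> equilibria a b cm d \<and>
            (phi a b cm d has_real_derivative 1) (at tm) \<and>
            (\<forall>t\<in>equilibria a b cm d. t \<noteq> tm \<longrightarrow> t < tm) \<and>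
            card (equilibria a b cM d) = 2 \<and> tM \<in> equilibria a b cM d \<and>
            (phi a b cM d has_real_derivative 1) (at tM) \<and>
            (\<forall>t\<in>equilibria a b cM d. t \<noteq> tM \<longrightarrow> tM < t) \<and>
            (\<forall>c. (cminus < c \<and> c < cm) \<or> (cM < c \<and> c < - sqrt (3*b*d)) \<longrightarrow>
                 card (equilibria a b c d) = 1)) \<and>
         (cm < cminus \<longrightarrow>
            (\<forall>c. cminus < c \<and> c < cM \<longrightarrow> card (equilibria a b c d) = 3) \<and>
            card (equilibria a b cM d) = 2 \<and> tM \<in> equilibria a b cM d \<and>
            (phi a b cM d has_real_derivative 1) (at tM) \<and>
            (\<forall>t\<in>equilibria a b cM d. t \<noteq> tM \<longrightarrow> tM < t) \<and>
            (\<forall>c. cM < c \<and> c < - sqrt (3*b*d) \<longrightarrow> card (equilibria a b c d) = 1)))"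
  proof
    assume "cb < (b^2 - 12*d) / (3*a)"
    hence Rneg: "R a b d t2 < 0" using Rcb by linarith
    obtain tM tm where tt: "0 < tM" "tM < t2" "t2 < tm" "R a b d tM = 0" "R a b d tm = 0"
      "\<And>t. 0 < t \<Longrightarrow> t < tM \<Longrightarrow> R a b d t > 0"
      "\<And>t. tM < t \<Longrightarrow> t < tm \<Longrightarrow> R a b d t < 0"
      "\<And>t. tm < t \<Longrightarrow> R a b d t > 0"
      using R_signs[OF ha hb hd t2 Rneg] by blast
    interpret tc: twocrit a b d tM tm
      using tt ha hb hd by unfold_locales auto
    define cM where "cM = G a b d tM"
    define cm where "cm = G a b d tm"
    have tMm: "tM < tm" using tt by simp
    have o2: "cm < cM" unfolding cm_def cM_def by (rule tc.cm_lt_cM)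
    have o1: "cb < cm"
    proof -
      have "cm = 4*tm^3 - 3*a*tm^2 - 2*b*tm" unfolding cm_def using G_at_R0[of tm a b d] tt by simp
      moreover have "4*tm^3 - 3*a*tm^2 - 2*b*tm - C = (tm - t2)^2 * (4*tm + 8*t2 - 3*a)"
        unfolding C_def using t2(2) by algebra
      moreover have "(tm - t2)^2 * (4*tm + 8*t2 - 3*a) > 0" using tt t2a t2 by (intro mult_pos_pos) auto
      ultimately show ?thesis unfolding cbC by linarith
    qed
    have o3: "cM < - sqrt (3*b*d)"
    proof -
      define T where "T = tM"
      define X where "X = - cM"
      have T: "T > 0" unfolding T_def using tt by simp
      have e: "3*T*X = a*T^3 + 2*b*T^2 + 4*d" unfolding X_def cM_def T_def using G_at_R0'[of tM a b d] tt by simp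
      have "a*T^3 > 0" using ha T by simp
      hence ge: "3*T*X \<ge> 2*b*T^2 + 4*d" using e by linarith
      have pos: "2*b*T^2 + 4*d > 0" using hb hd T by (intro add_pos_pos) auto
      have "(3*T*X)^2 \<ge> (2*b*T^2 + 4*d)^2" using ge pos by (intro power_mono) auto
      moreover have "(2*b*T^2 + 4*d)^2 = 32*b*d*T^2 + (2*b*T^2 - 4*d)^2" by (simp add: algebra_simps power2_eq_square)
      moreover have "(2*b*T^2 - 4*d)^2 \<ge> 0" by simp
      moreover have "(3*T*X)^2 = 9*T^2*X^2" by (simp add: power_mult_distrib)
      ultimately have "9*T^2*X^2 \<ge> 32*b*d*T^2" by linarith
      moreover have "b*d*T^2 > 0" using hb hd T by simp
      ultimately have "27*(b*d*T^2) < 9*(T^2*X^2)" by linarith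
      hence "T^2 * (3*b*d) < T^2 * X^2" by (simp add: algebra_simps)
      hence lt: "3*b*d < X^2" using T by simp
      have "3*T*X > 0" using pos ge by linarith
      hence Xp: "X > 0" using T by (simp add: zero_less_mult_iff)
      have "sqrt (3*b*d) < sqrt (X^2)" using lt by (rule real_sqrt_less_mono)
      hence "sqrt (3*b*d) < X" using Xp by simp
      thus ?thesis unfolding X_def by simp
    qed
    have o4: "cminus < cM"
    proof -
      define f where "f x = 2*a*x^3 + b*x^2 - d" for x
      define B where "B = 1 + d/b"
      have B1: "B \<ge> 1" unfolding B_def using hb hd by simp
      have "b*B^2 \<ge> b*B" using B1 hb by (simp add: power2_eq_square)
      moreover have "b*B = b + d" unfolding B_def using hb by (simp add: field_simps)
      moreover have "2*a*B^3 \<ge> 0" using ha B1 by simp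
      ultimately have fB: "f B \<ge> 0" unfolding f_def using hb by linarith
      have f0: "f 0 \<le> 0" unfolding f_def using hd by simp
      have "continuous_on {0..B} f" unfolding f_def by (auto intro!: continuous_intros)
      then obtain x0 where x0: "0 \<le> x0" "x0 \<le> B" "f x0 = 0" using IVT'[of f 0 0 B] fB f0 B1 by auto
      have x0p: "x0 > 0" using x0 hd unfolding f_def by (auto simp: order_le_less)
      have dx: "d = 2*a*x0^3 + b*x0^2" using x0 unfolding f_def by simp
      define c0 where "c0 = -3*a*x0^2 - 2*b*x0"
      have "a*x0^2 > 0" "b*x0 > 0" using ha hb x0p by auto
      hence c0n: "c0 < 0" unfolding c0_def by linarith
      have Qc0: "Qf a b d c0 = 0" unfolding Qf_def c0_def using Q_c0[OF dx] .
      have cmc0: "cminus = c0" using Q_uniq[OF ha hb hd hcm(1) c0n hcm(2) Qc0] .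
      define T where "T = tM"
      have T: "T > 0" "T < t2" "R a b d T = 0" unfolding T_def using tt by auto
      have qT: "12*T^2 - 6*a*T - 2*b < 0" using q_neg[OF hb t2(1) t2(2) T(1) T(2)] .
      hence q6: "6*T^2 < 3*a*T + b" by linarith
      have E: "(x0-T)^2*(a*(x0+2*T)+b) + T^3*(4*x0-3*T) > 0" using E_pos[OF x0p T(1) ha hb q6] .
      have dT: "d = -3*T^4 + 2*a*T^3 + b*T^2" using T(3) unfolding R_def by simp
      have e3: "3*T*G a b d T = -(a*T^3 + 2*b*T^2 + 4*d)" using G_at_R0'[of T a b d] T by simp
      have idE: "3*T*((x0-T)^2*(a*(x0+2*T)+b) + T^3*(4*x0-3*T)) = 3*T*(a*x0^3+b*x0^2+d) - x0*(a*T^3+2*b*T^2+4*d)"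
        using dT by algebra
      have "3*T*(a*x0^3+b*x0^2+d) - x0*(a*T^3+2*b*T^2+4*d) = 3*T*x0*(G a b d T - c0)"
        using e3 dx unfolding c0_def by algebra
      moreover have "3*T*((x0-T)^2*(a*(x0+2*T)+b) + T^3*(4*x0-3*T)) > 0" using E T by simp
      ultimately have "3*T*x0*(G a b d T - c0) > 0" using idE by linarith
      moreover have "T*x0 > 0" using T x0p by simp
      ultimately have "G a b d T - c0 > 0" by (auto simp: zero_less_mult_iff)
      thus ?thesis unfolding cmc0 cM_def T_def by simp
    qed
    have o6: "touches (Pp a b cm d) tm" unfolding cm_def by (rule tc.touch_m)
    have o7: "loc_min_pt (poly (Pp a b cm d)) tm" unfolding cm_def by (rule tc.locmin)
    have o8: "\<forall>t>0. touches (Pp a b cm d) t \<longrightarrow> t = tm"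
      using tc.touch_only o2 unfolding cm_def cM_def by fastforce
    have o9: "touches (Pp a b cM d) tM" unfolding cM_def by (rule tc.touch_M)
    have o10: "loc_max_pt (poly (Pp a b cM d)) tM" unfolding cM_def by (rule tc.locmax)
    have o11: "\<forall>t>0. touches (Pp a b cM d) t \<longrightarrow> t = tM"
      using tc.touch_only o2 unfolding cm_def cM_def by fastforce
    have o12: "\<forall>c t. cb < c \<and> c < cm \<and> t > 0 \<longrightarrow> \<not> touches (Pp a b c d) t"
      using tc.touch_only o2 unfolding cm_def cM_def by fastforce
    have o13: "\<forall>c t. cm < c \<and> c < cM \<and> t > 0 \<longrightarrow> \<not> touches (Pp a b c d) t"
      using tc.touch_only o2 unfolding cm_def cM_def by fastforce
    have K3: "\<forall>c. cm < c \<and> c < cM \<longrightarrow> card (equilibria a b c d) = 3"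
      unfolding cm_def cM_def using tc.K3 by blast
    have K2m: "card (equilibria a b cm d) = 2 \<and> tm \<in> equilibria a b cm d \<and>
      (\<forall>t\<in>equilibria a b cm d. t \<noteq> tm \<longrightarrow> t < tm)" unfolding cm_def by (rule tc.K2m)
    have K2M: "card (equilibria a b cM d) = 2 \<and> tM \<in> equilibria a b cM d \<and>
      (\<forall>t\<in>equilibria a b cM d. t \<noteq> tM \<longrightarrow> tM < t)" unfolding cM_def by (rule tc.K2M)
    have Dm: "(phi a b cm d has_real_derivative 1) (at tm)" using phi_deriv[OF _ o6] tt by simp
    have DM: "(phi a b cM d has_real_derivative 1) (at tM)" using phi_deriv[OF _ o9] tt by simp
    have Klo: "\<forall>c. c < cm \<longrightarrow> card (equilibria a b c d) = 1" unfolding cm_def using tc.K1lo by blast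
    have Khi: "\<forall>c. cM < c \<longrightarrow> card (equilibria a b c d) = 1" unfolding cM_def using tc.K1hi by blast
    have c1: "cminus \<le> cm \<longrightarrow>
            (\<forall>c. cm < c \<and> c < cM \<longrightarrow> card (equilibria a b c d) = 3) \<and>
            card (equilibria a b cm d) = 2 \<and> tm \<in> equilibria a b cm d \<and>
            (phi a b cm d has_real_derivative 1) (at tm) \<and>
            (\<forall>t\<in>equilibria a b cm d. t \<noteq> tm \<longrightarrow> t < tm) \<and>
            card (equilibria a b cM d) = 2 \<and> tM \<in> equilibria a b cM d \<and>
            (phi a b cM d has_real_derivative 1) (at tM) \<and>
            (\<forall>t\<in>equilibria a b cM d. t \<noteq> tM \<longrightarrow> tM < t) \<and>
            (\<forall>c. (cminus < c \<and> c < cm) \<or> (cM < c \<and> c < - sqrt (3*b*d)) \<longrightarrow>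
                 card (equilibria a b c d) = 1)"
      using K3 K2m K2M Dm DM Klo Khi by blast
    have c2: "cm < cminus \<longrightarrow>
            (\<forall>c. cminus < c \<and> c < cM \<longrightarrow> card (equilibria a b c d) = 3) \<and>
            card (equilibria a b cM d) = 2 \<and> tM \<in> equilibria a b cM d \<and>
            (phi a b cM d has_real_derivative 1) (at tM) \<and>
            (\<forall>t\<in>equilibria a b cM d. t \<noteq> tM \<longrightarrow> tM < t) \<and>
            (\<forall>c. cM < c \<and> c < - sqrt (3*b*d) \<longrightarrow> card (equilibria a b c d) = 1)"
    proof
      assume "cm < cminus"
      hence "\<forall>c. cminus < c \<and> c < cM \<longrightarrow> card (equilibria a b c d) = 3" using K3 by auto
      thus "(\<forall>c. cminus < c \<and> c < cM \<longrightarrow> card (equilibria a b c d) = 3) \<and>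
            card (equilibria a b cM d) = 2 \<and> tM \<in> equilibria a b cM d \<and>
            (phi a b cM d has_real_derivative 1) (at tM) \<and>
            (\<forall>t\<in>equilibria a b cM d. t \<noteq> tM \<longrightarrow> tM < t) \<and>
            (\<forall>c. cM < c \<and> c < - sqrt (3*b*d) \<longrightarrow> card (equilibria a b c d) = 1)"
        using K2M DM Khi by blast
    qed
    show "\<exists>cm cM tm tM.
         cb < cm \<and> cm < cM \<and> cM < - sqrt (3*b*d) \<and> cminus < cM \<and>
         0 < tM \<and> tM < tm \<and>
         touches (Pp a b cm d) tm \<and> loc_min_pt (poly (Pp a b cm d)) tm \<and>
         (\<forall>t>0. touches (Pp a b cm d) t \<longrightarrow> t = tm) \<and>
         touches (Pp a b cM d) tM \<and> loc_max_pt (poly (Pp a b cM d)) tM \<and>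
         (\<forall>t>0. touches (Pp a b cM d) t \<longrightarrow> t = tM) \<and>
         (\<forall>c t. cb < c \<and> c < cm \<and> t > 0 \<longrightarrow> \<not> touches (Pp a b c d) t) \<and>
         (\<forall>c t. cm < c \<and> c < cM \<and> t > 0 \<longrightarrow> \<not> touches (Pp a b c d) t) \<and>
         (cminus \<le> cm \<longrightarrow>
            (\<forall>c. cm < c \<and> c < cM \<longrightarrow> card (equilibria a b c d) = 3) \<and>
            card (equilibria a b cm d) = 2 \<and> tm \<in> equilibria a b cm d \<and>
            (phi a b cm d has_real_derivative 1) (at tm) \<and>
            (\<forall>t\<in>equilibria a b cm d. t \<noteq> tm \<longrightarrow> t < tm) \<and>
            card (equilibria a b cM d) = 2 \<and> tM \<in> equilibria a b cM d \<and>
            (phi a b cM d has_real_derivative 1) (at tM) \<and>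
            (\<forall>t\<in>equilibria a b cM d. t \<noteq> tM \<longrightarrow> tM < t) \<and>
            (\<forall>c. (cminus < c \<and> c < cm) \<or> (cM < c \<and> c < - sqrt (3*b*d)) \<longrightarrow>
                 card (equilibria a b c d) = 1)) \<and>
         (cm < cminus \<longrightarrow>
            (\<forall>c. cminus < c \<and> c < cM \<longrightarrow> card (equilibria a b c d) = 3) \<and>
            card (equilibria a b cM d) = 2 \<and> tM \<in> equilibria a b cM d \<and>
            (phi a b cM d has_real_derivative 1) (at tM) \<and>
            (\<forall>t\<in>equilibria a b cM d. t \<noteq> tM \<longrightarrow> tM < t) \<and>
            (\<forall>c. cM < c \<and> c < - sqrt (3*b*d) \<longrightarrow> card (equilibria a b c d) = 1))"
      apply (rule exI[of _ cm], rule exI[of _ cM], rule exI[of _ tm], rule exI[of _ tM])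
      using o1 o2 o3 o4 tt(1) tMm o6 o7 o8 o9 o10 o11 o12 o13 c1 c2 by blast
  qed
  show ?thesis using partA partB partC by blast
qed


end
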